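(* Let $n\in\mathbb{N}$ be such that \[W_n=\{\langle m,\ulcorner\phi\urcorner\rangle : \phi\text{ is an }\mathscr{L}\text{-formula with }FV(\phi)\subseteq\{x\}\text{ and }\Sigma(n)\models\phi(x|\overline{m})\}.\] Then $\mathcal{M}_{\Sigma(n)}\models\Sigma(n)$.
   Context: $\mathscr{L}$ is the language of Peano arithmetic (variables, constant $0$, unary $S$, binary $+$, $\cdot$) extended by a unary modal operator $K$: whenever $\phi$ is a formula, $K\phi$ is a formula (called purely modal). An $\mathscr{L}$-structure consists of a first-order structure for the arithmetic part together with a truth value for each purely modal formula $K\phi$ and each assignment $s$ of the variables, subject to: (a) independence from $s(x)$ for $x$ not free in $\phi$; (b) invariance under alphabetic variants of $\phi$; (c) $\mathcal{M}\models K\phi(x|y)[s]$ iff $\mathcal{M}\models K\phi[s(x|s(y))]$ when $y$ is substitutable for $x$ in $\phi$. Satisfaction is extended inductively to all formulas; $\mathcal{M}\models\Sigma$ means $\mathcal{M}$ satisfies every member of $\Sigma$ under every assignment. $\Sigma\models\phi$ means every $\mathscr{L}$-structure satisfying $\Sigma$ satisfies $\phi$ under all assignments; $\phi$ is valid if $\emptyset\models\phi$. $W_e$ denotes the $e$-th recursively enumerable set; $\ulcorner\phi\urcorner$ is the canonical Gödel number of $\phi$; $\overline{k}$ is the numeral for $k$; $\langle\cdot,\cdot\rangle$ is a canonical computable bijection $\mathbb{N}^2\to\mathbb{N}$; inside $\mathscr{L}$, $\langle t_1,t_2\rangle\in W_{t_3}$ abbreviates a fixed Peano-arithmetic formula defining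 this relation. For a formula $\phi$ and an assignment $s$ into $\mathbb{N}$, $\phi^s$ is obtained by replacing each free variable $x$ of $\phi$ by $\overline{s(x)}$. For a set $\Sigma$ of sentences, $\mathcal{M}_\Sigma$ is the $\mathscr{L}$-structure with universe $\mathbb{N}$, arithmetic symbols interpreted as usual, and $\mathcal{M}_\Sigma\models K\phi[s]$ iff $\Sigma\models\phi^s$. Schemata: $E1$: universal closure of $K\phi$ for $\phi$ valid; $E2$: universal closure of $K(\phi\rightarrow\psi)\rightarrow K\phi\rightarrow K\psi$; $E4$: universal closure of $K\phi\rightarrow KK\phi$. Axioms of Peano arithmetic for $\mathscr{L}$: the usual axioms for successor, addition and multiplication together with induction for all $\mathscr{L}$-formulas. Assigned validity: the sentences $\phi^s$ for $\phi$ valid and $s$ any assignment into $\mathbb{N}$. For $n\in\mathbb{N}$, $\Sigma(n)$ is the set of sentences consisting of: (1) all instances of $E1$, $E2$, $E4$; (2) the axioms of Peano arithmetic for $\mathscr{L}$; (3) $\forall x(K\phi\leftrightarrow\langle x,\overline{\ulcorner\phi\urcorner}\rangle\in W_{\overline{n}})$ for every $\mathscr{L}$-formula $\phi$ with $FV(\phi)\subseteq\{x\}$; (4) all instances of assigned validity; (5) $K\phi$ whenever $\phi$ is in (1)–(4) or (recursively) in (5). *)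

theory Defs
  imports Main "HOL-Library.Nat_Bijection"
begin

section \<open>Syntax of the language L (PA plus a unary modal operator K)\<close>

datatype tm = Var nat | Zero | Sc tm | Pl tm tm | Ml tm tm

datatype fm = Eq tm tm | Neg fm | Imp fm fm | All nat fm | K fm

definition And :: "fm \<Rightarrow> fm \<Rightarrow> fm" where "And a b = Neg (Imp a (Neg b))"
definition Iff :: "fm \<Rightarrow> fm \<Rightarrow> fm" where "Iff a b = And (Imp a b) (Imp b a)"
definition Exq :: "nat \<Rightarrow> fm \<Rightarrow> fm" where "Exq x a = Neg (All x (Neg a))"

fun FVt :: "tm \<Rightarrow> nat set" where
  "FVt (Var x) = {x}"
| "FVt Zero = {}"
| "FVt (Sc t) = FVt t"
| "FVt (Pl t u) = FVt t \<union> FVt u"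
| "FVt (Ml t u) = FVt t \<union> FVt u"

fun FV :: "fm \<Rightarrow> nat set" where
  "FV (Eq t u) = FVt t \<union> FVt u"
| "FV (Neg a) = FV a"
| "FV (Imp a b) = FV a \<union> FV b"
| "FV (All x a) = FV a - {x}"
| "FV (K a) = FV a"

fun vars :: "fm \<Rightarrow> nat set" where
  "vars (Eq t u) = FVt t \<union> FVt u"
| "vars (Neg a) = vars a"
| "vars (Imp a b) = vars a \<union> vars b"
| "vars (All x a) = insert x (vars a)"
| "vars (K a) = vars a"

text \<open>Simultaneous (naive) substitution of terms for the free variables.\<close>
fun substt :: "(nat \<Rightarrow> tm) \<Rightarrow> tm \<Rightarrow> tm" where
  "substt \<sigma> (Var x) = \<sigma> x"
| "substt \<sigma> Zero = Zero"
| "substt \<sigma> (Sc t) = Sc (substt \<sigma> t)"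
| "substt \<sigma> (Pl t u) = Pl (substt \<sigma> t) (substt \<sigma> u)"
| "substt \<sigma> (Ml t u) = Ml (substt \<sigma> t) (substt \<sigma> u)"

fun substs :: "(nat \<Rightarrow> tm) \<Rightarrow> fm \<Rightarrow> fm" where
  "substs \<sigma> (Eq t u) = Eq (substt \<sigma> t) (substt \<sigma> u)"
| "substs \<sigma> (Neg a) = Neg (substs \<sigma> a)"
| "substs \<sigma> (Imp a b) = Imp (substs \<sigma> a) (substs \<sigma> b)"
| "substs \<sigma> (All x a) = All x (substs (\<sigma>(x := Var x)) a)"
| "substs \<sigma> (K a) = K (substs \<sigma> a)"

text \<open>\<open>subst x t \<phi>\<close> is \<open>\<phi>(x|t)\<close>: replace the free occurrences of x by t.\<close>
definition subst :: "nat \<Rightarrow> tm \<Rightarrow> fm \<Rightarrow> fm" where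
  "subst x t a = substs (Var(x := t)) a"

text \<open>t is substitutable for x in \<phi> (Enderton).\<close>
fun substitutable :: "tm \<Rightarrow> nat \<Rightarrow> fm \<Rightarrow> bool" where
  "substitutable t x (Eq u v) = True"
| "substitutable t x (Neg a) = substitutable t x a"
| "substitutable t x (Imp a b) = (substitutable t x a \<and> substitutable t x b)"
| "substitutable t x (All y a) =
     (x \<notin> FV (All y a) \<or> (y \<notin> FVt t \<and> substitutable t x a))"
| "substitutable t x (K a) = substitutable t x a"

fun idx :: "nat list \<Rightarrow> nat \<Rightarrow> nat option" where
  "idx [] x = None"
| "idx (y # ys) x = (if x = y then Some 0 else map_option Suc (idx ys x))"

definition alpha_var :: "nat list \<Rightarrow> nat list \<Rightarrow> nat \<Rightarrow> nat \<Rightarrow> bool" where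
  "alpha_var e1 e2 x y = (idx e1 x = idx e2 y \<and> (idx e1 x = None \<longrightarrow> x = y))"

fun alpha_tm :: "nat list \<Rightarrow> nat list \<Rightarrow> tm \<Rightarrow> tm \<Rightarrow> bool" where
  "alpha_tm e1 e2 (Var x) (Var y) = alpha_var e1 e2 x y"
| "alpha_tm e1 e2 Zero Zero = True"
| "alpha_tm e1 e2 (Sc t) (Sc u) = alpha_tm e1 e2 t u"
| "alpha_tm e1 e2 (Pl t t') (Pl u u') = (alpha_tm e1 e2 t u \<and> alpha_tm e1 e2 t' u')"
| "alpha_tm e1 e2 (Ml t t') (Ml u u') = (alpha_tm e1 e2 t u \<and> alpha_tm e1 e2 t' u')"
| "alpha_tm e1 e2 _ _ = False"

fun alpha_fm :: "nat list \<Rightarrow> nat list \<Rightarrow> fm \<Rightarrow> fm \<Rightarrow> bool" where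
  "alpha_fm e1 e2 (Eq t t') (Eq u u') = (alpha_tm e1 e2 t u \<and> alpha_tm e1 e2 t' u')"
| "alpha_fm e1 e2 (Neg a) (Neg b) = alpha_fm e1 e2 a b"
| "alpha_fm e1 e2 (Imp a a') (Imp b b') = (alpha_fm e1 e2 a b \<and> alpha_fm e1 e2 a' b')"
| "alpha_fm e1 e2 (All x a) (All y b) = alpha_fm (x # e1) (y # e2) a b"
| "alpha_fm e1 e2 (K a) (K b) = alpha_fm e1 e2 a b"
| "alpha_fm e1 e2 _ _ = False"

definition alphabetic_variant :: "fm \<Rightarrow> fm \<Rightarrow> bool" where
  "alphabetic_variant a b = alpha_fm [] [] a b"

definition uclose :: "fm \<Rightarrow> fm" where
  "uclose a = foldr All (sorted_list_of_set (FV a)) a"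

fun num :: "nat \<Rightarrow> tm" where
  "num 0 = Zero"
| "num (Suc k) = Sc (num k)"

text \<open>\<open>\<phi>^s\<close>: replace each free variable x by the numeral of s(x).\<close>
definition assigned :: "fm \<Rightarrow> (nat \<Rightarrow> nat) \<Rightarrow> fm" where
  "assigned a s = substs (\<lambda>x. num (s x)) a"

text \<open>Pairing: Cantor pairing \<open>prod_encode\<close> (a canonical computable bijection).\<close>

fun gnt :: "tm \<Rightarrow> nat" where
  "gnt (Var x) = prod_encode (0, x)"
| "gnt Zero = prod_encode (1, 0)"
| "gnt (Sc t) = prod_encode (2, gnt t)"
| "gnt (Pl t u) = prod_encode (3, prod_encode (gnt t, gnt u))"
| "gnt (Ml t u) = prod_encode (4, prod_encode (gnt t, gnt u))"

fun gn :: "fm \<Rightarrow> nat" where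
  "gn (Eq t u) = prod_encode (0, prod_encode (gnt t, gnt u))"
| "gn (Neg a) = prod_encode (1, gn a)"
| "gn (Imp a b) = prod_encode (2, prod_encode (gn a, gn b))"
| "gn (All x a) = prod_encode (3, prod_encode (x, gn a))"
| "gn (K a) = prod_encode (4, gn a)"

datatype recf = Zf | Sf | Proj nat | Comp recf "recf list" | Prim recf recf | Mu recf

inductive evalr :: "recf \<Rightarrow> nat list \<Rightarrow> nat \<Rightarrow> bool" where
  "evalr Zf xs 0"
| "evalr Sf (x # xs) (Suc x)"
| "i < length xs \<Longrightarrow> evalr (Proj i) xs (xs ! i)"
| "list_all2 (\<lambda>g y. evalr g xs y) gs ys \<Longrightarrow> evalr f ys z \<Longrightarrow> evalr (Comp f gs) xs z"
| "evalr f xs y \<Longrightarrow> evalr (Prim f g) (0 # xs) y"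
| "evalr (Prim f g) (n # xs) r \<Longrightarrow> evalr g (n # r # xs) y \<Longrightarrow> evalr (Prim f g) (Suc n # xs) y"
| "evalr f (y # xs) 0 \<Longrightarrow> (\<forall>z<y. \<exists>v. v \<noteq> 0 \<and> evalr f (z # xs) v) \<Longrightarrow> evalr (Mu f) xs y"

fun code :: "recf \<Rightarrow> nat" where
  "code Zf = prod_encode (0, 0)"
| "code Sf = prod_encode (1, 0)"
| "code (Proj i) = prod_encode (2, i)"
| "code (Comp f gs) = prod_encode (3, prod_encode (code f, list_encode (map code gs)))"
| "code (Prim f g) = prod_encode (4, prod_encode (code f, code g))"
| "code (Mu f) = prod_encode (5, code f)"

text \<open>W e: domain of the e-th unary partial recursive function (empty if e codes none).\<close>
definition W :: "nat \<Rightarrow> nat set" where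
  "W e = {m. \<exists>f. code f = e \<and> (\<exists>y. evalr f [m] y)}"

text \<open>An L-structure: universe (a nonempty subset of nat; by Loewenheim--Skolem,
countable universes suffice for the consequence relation of this countable language),
interpretations of 0, S, +, *, and a truth value for each K\<phi> and assignment.\<close>

record str =
  univ :: "nat set"
  zer :: nat
  suc :: "nat \<Rightarrow> nat"
  pls :: "nat \<Rightarrow> nat \<Rightarrow> nat"
  tms :: "nat \<Rightarrow> nat \<Rightarrow> nat"
  kint :: "fm \<Rightarrow> (nat \<Rightarrow> nat) \<Rightarrow> bool"

definition is_assign :: "str \<Rightarrow> (nat \<Rightarrow> nat) \<Rightarrow> bool" where
  "is_assign M s = (\<forall>x. s x \<in> univ M)"

fun evt :: "str \<Rightarrow> (nat \<Rightarrow> nat) \<Rightarrow> tm \<Rightarrow> nat" where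
  "evt M s (Var x) = s x"
| "evt M s Zero = zer M"
| "evt M s (Sc t) = suc M (evt M s t)"
| "evt M s (Pl t u) = pls M (evt M s t) (evt M s u)"
| "evt M s (Ml t u) = tms M (evt M s t) (evt M s u)"

fun sat :: "str \<Rightarrow> fm \<Rightarrow> (nat \<Rightarrow> nat) \<Rightarrow> bool" where
  "sat M (Eq t u) s = (evt M s t = evt M s u)"
| "sat M (Neg a) s = (\<not> sat M a s)"
| "sat M (Imp a b) s = (sat M a s \<longrightarrow> sat M b s)"
| "sat M (All x a) s = (\<forall>d\<in>univ M. sat M a (s(x := d)))"
| "sat M (K a) s = kint M a s"

definition is_structure :: "str \<Rightarrow> bool" where
  "is_structure M \<longleftrightarrow>
     univ M \<noteq> {} \<and> zer M \<in> univ M \<and>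
     (\<forall>a\<in>univ M. suc M a \<in> univ M) \<and>
     (\<forall>a\<in>univ M. \<forall>b\<in>univ M. pls M a b \<in> univ M \<and> tms M a b \<in> univ M) \<and>
     \<comment> \<open>(a)\<close>
     (\<forall>a s s'. is_assign M s \<longrightarrow> is_assign M s' \<longrightarrow> (\<forall>x\<in>FV a. s x = s' x)
        \<longrightarrow> kint M a s = kint M a s') \<and>
     \<comment> \<open>(b)\<close>
     (\<forall>a b s. is_assign M s \<longrightarrow> alphabetic_variant a b \<longrightarrow> kint M a s = kint M b s) \<and>
     \<comment> \<open>(c)\<close>
     (\<forall>a x y s. is_assign M s \<longrightarrow> substitutable (Var y) x a \<longrightarrow>
        kint M (subst x (Var y) a) s = kint M a (s(x := s y)))"

definition models :: "str \<Rightarrow> fm set \<Rightarrow> bool" where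
  "models M \<Sigma> \<longleftrightarrow> (\<forall>a\<in>\<Sigma>. \<forall>s. is_assign M s \<longrightarrow> sat M a s)"

definition entails :: "fm set \<Rightarrow> fm \<Rightarrow> bool" where
  "entails \<Sigma> a \<longleftrightarrow> (\<forall>M. is_structure M \<longrightarrow> models M \<Sigma> \<longrightarrow>
      (\<forall>s. is_assign M s \<longrightarrow> sat M a s))"

definition valid :: "fm \<Rightarrow> bool" where
  "valid a \<longleftrightarrow> entails {} a"

definition M_of :: "fm set \<Rightarrow> str" where
  "M_of \<Sigma> = \<lparr> univ = UNIV, zer = 0, suc = Suc, pls = (+), tms = (*),
              kint = (\<lambda>a s. entails \<Sigma> (assigned a s)) \<rparr>"

text \<open>Standard model of arithmetic (K interpreted arbitrarily; used only for K-free formulas).\<close>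
definition Nstd :: str where
  "Nstd = \<lparr> univ = UNIV, zer = 0, suc = Suc, pls = (+), tms = (*), kint = (\<lambda>a s. False) \<rparr>"

inductive delta0 :: "fm \<Rightarrow> bool" where
  "delta0 (Eq t u)"
| "delta0 a \<Longrightarrow> delta0 (Neg a)"
| "delta0 a \<Longrightarrow> delta0 b \<Longrightarrow> delta0 (Imp a b)"
| "delta0 a \<Longrightarrow> y \<notin> FVt t \<Longrightarrow> z \<noteq> y \<Longrightarrow> z \<notin> FVt t \<Longrightarrow>
     delta0 (All y (Imp (Exq z (Eq (Pl (Var y) (Sc (Var z))) t)) a))"
   \<comment> \<open>bounded quantifier \<open>\<forall>y < t\<close>, with \<open>y < t\<close> expressed as \<open>\<exists>z (y + Sz = t)\<close>\<close>

inductive sigma1 :: "fm \<Rightarrow> bool" where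
  "delta0 a \<Longrightarrow> sigma1 a"
| "sigma1 a \<Longrightarrow> sigma1 (Exq y a)"

definition defines_W :: "fm \<Rightarrow> bool" where
  "defines_W WF \<longleftrightarrow> sigma1 WF \<and> FV WF \<subseteq> {0, 1, 2} \<and>
     (\<forall>s. sat Nstd WF s \<longleftrightarrow> prod_encode (s 0, s 1) \<in> W (s 2))"

text \<open>The abbreviation \<open>\<langle>t1,t2\<rangle> \<in> W_t3\<close>: \<open>\<exists>a b c (a = t1 \<and> b = t2 \<and> c = t3 \<and> WF(a,b,c))\<close>
with a,b,c fresh (so no capture occurs).\<close>
definition memW :: "fm \<Rightarrow> tm \<Rightarrow> tm \<Rightarrow> tm \<Rightarrow> fm" where
  "memW WF t1 t2 t3 =
    (let N = Suc (Max ({0} \<union> vars WF \<union> FVt t1 \<union> FVt t2 \<union> FVt t3));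
         a = N; b = N + 1; c = N + 2
     in Exq a (Exq b (Exq c (And (Eq (Var a) t1) (And (Eq (Var b) t2) (And (Eq (Var c) t3)
          (substs (Var(0 := Var a, 1 := Var b, 2 := Var c)) WF)))))))"

abbreviation xv :: nat where "xv \<equiv> 0"

definition E1 :: "fm set" where "E1 = {uclose (K a) | a. valid a}"
definition E2 :: "fm set" where
  "E2 = {uclose (Imp (K (Imp a b)) (Imp (K a) (K b))) | a b. True}"
definition E4 :: "fm set" where "E4 = {uclose (Imp (K a) (K (K a))) | a. True}"

definition PA :: "fm set" where
  "PA = {All 0 (Neg (Eq (Sc (Var 0)) Zero)),
         All 0 (All 1 (Imp (Eq (Sc (Var 0)) (Sc (Var 1))) (Eq (Var 0) (Var 1)))),
         All 0 (Eq (Pl (Var 0) Zero) (Var 0)),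
         All 0 (All 1 (Eq (Pl (Var 0) (Sc (Var 1))) (Sc (Pl (Var 0) (Var 1))))),
         All 0 (Eq (Ml (Var 0) Zero) Zero),
         All 0 (All 1 (Eq (Ml (Var 0) (Sc (Var 1))) (Pl (Ml (Var 0) (Var 1)) (Var 0))))}
   \<union> {uclose (Imp (subst x Zero a) (Imp (All x (Imp a (subst x (Sc (Var x)) a))) (All x a)))
       | a x. True}"

definition Ax3 :: "fm \<Rightarrow> nat \<Rightarrow> fm set" where
  "Ax3 WF n = {All xv (Iff (K a) (memW WF (Var xv) (num (gn a)) (num n))) | a. FV a \<subseteq> {xv}}"

definition AV :: "fm set" where
  "AV = {assigned a s | a s. valid a}"

definition SigmaT :: "fm \<Rightarrow> nat \<Rightarrow> fm set" where
  "SigmaT WF n = {(K ^^ j) a | a j. a \<in> E1 \<union> E2 \<union> E4 \<union> PA \<union> Ax3 WF n \<union> AV}"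

end

theory Submission
  imports Defs
begin

lemma finite_FVt[simp]: "finite (FVt t)" by (induction t) auto
lemma finite_FV[simp]: "finite (FV a)" by (induction a) auto
lemma FVt_num[simp]: "FVt (num k) = {}" by (induction k) auto
lemma finite_vars[simp]: "finite (vars a)" by (induction a) auto
lemma FV_vars: "FV a \<subseteq> vars a" by (induction a) auto

lemma substt_cong: "(\<forall>y\<in>FVt t. \<sigma> y = \<tau> y) \<Longrightarrow> substt \<sigma> t = substt \<tau> t"
  by (induction t) auto

lemma substs_cong: "(\<forall>y\<in>FV a. \<sigma> y = \<tau> y) \<Longrightarrow> substs \<sigma> a = substs \<tau> a"
proof (induction a arbitrary: \<sigma> \<tau>)
  case (Eq t u) then show ?case using substt_cong by (metis FV.simps(1) UnCI substs.simps(1))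
next
  case (All x a) then show ?case by auto
qed auto

lemma substt_Var[simp]: "substt Var t = t" by (induction t) auto
lemma substs_Var[simp]: "substs Var a = a"
  by (induction a) (auto simp: fun_upd_idem)

lemma FV_substs: "FV (substs \<sigma> a) \<subseteq> (\<Union>y\<in>FV a. FVt (\<sigma> y))"
proof (induction a arbitrary: \<sigma>)
  case (Eq t u)
  have "FVt (substt \<sigma> t) \<subseteq> (\<Union>y\<in>FVt t. FVt (\<sigma> y))" for t by (induction t) auto
  then show ?case by fastforce
next
  case (All x a)
  show ?case
  proof
    fix z assume "z \<in> FV (substs \<sigma> (All x a))"
    then have z: "z \<in> FV (substs (\<sigma>(x := Var x)) a)" "z \<noteq> x" by auto
    with All[of "\<sigma>(x := Var x)"] obtain y where "y \<in> FV a" "z \<in> FVt ((\<sigma>(x := Var x)) y)" by blast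
    with z show "z \<in> (\<Union>y\<in>FV (All x a). FVt (\<sigma> y))" by (cases "y = x") auto
  qed
qed fastforce+

lemma FV_assigned[simp]: "FV (assigned a s) = {}"
  using FV_substs[of "\<lambda>x. num (s x)" a] by (auto simp: assigned_def)

lemma assigned_closed: "FV a = {} \<Longrightarrow> assigned a s = a"
  unfolding assigned_def using substs_cong[of a "\<lambda>x. num (s x)" Var] by simp

lemma FV_foldr_All: "FV (foldr All xs a) = FV a - set xs"
  by (induction xs) auto

lemma FV_uclose[simp]: "FV (uclose a) = {}"
  by (simp add: uclose_def FV_foldr_All)

lemma FV_funpow_K[simp]: "FV ((K ^^ j) a) = FV a" by (induction j) auto

definition Qc :: "(nat \<Rightarrow> tm) \<Rightarrow> fm \<Rightarrow> bool" where
  "Qc \<sigma> a = (\<forall>y\<in>FV a. \<forall>z\<in>FVt (\<sigma> y). z = y \<or> z \<notin> vars a)"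

fun kfree :: "fm \<Rightarrow> bool" where
  "kfree (Eq t u) = True"
| "kfree (Neg a) = kfree a"
| "kfree (Imp a b) = (kfree a \<and> kfree b)"
| "kfree (All x a) = kfree a"
| "kfree (K a) = False"

fun simple :: "tm \<Rightarrow> bool" where
  "simple (Var x) = True"
| "simple Zero = True"
| "simple (Sc t) = simple t"
| "simple (Pl t u) = False"
| "simple (Ml t u) = False"

lemma Qc_Neg[simp]: "Qc \<sigma> (Neg a) = Qc \<sigma> a" by (simp add: Qc_def)
lemma Qc_Imp: "Qc \<sigma> (Imp a b) \<Longrightarrow> Qc \<sigma> a \<and> Qc \<sigma> b" by (auto simp: Qc_def)
lemma Qc_K[simp]: "Qc \<sigma> (K a) = Qc \<sigma> a" by (simp add: Qc_def)
lemma Qc_All: "Qc \<sigma> (All x a) \<Longrightarrow> Qc (\<sigma>(x := Var x)) a"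
  by (auto simp: Qc_def)
lemma Qc_All2: "Qc \<sigma> (All x a) \<Longrightarrow> y \<in> FV a \<Longrightarrow> y \<noteq> x \<Longrightarrow> x \<notin> FVt (\<sigma> y)"
  by (auto simp: Qc_def)

lemma evt_cong: "(\<forall>x\<in>FVt t. s x = s' x) \<Longrightarrow> evt M s t = evt M s' t"
  by (induction t) auto

lemma evt_substt: "evt M s (substt \<sigma> t) = evt M (\<lambda>y. evt M s (\<sigma> y)) t"
  by (induction t) auto

lemma sat_cong_kfree: "kfree a \<Longrightarrow> (\<forall>x\<in>FV a. s x = s' x) \<Longrightarrow> sat M a s = sat M a s'"
proof (induction a arbitrary: s s')
  case (Eq t u) then show ?case using evt_cong by (metis FV.simps(1) UnCI sat.simps(1))
next
  case (All x a)
  have "\<And>d. sat M a (s(x := d)) = sat M a (s'(x := d))"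
    using All by (intro All.IH) auto
  then show ?case by simp
next
  case (Imp a b)
  have "sat M a s = sat M a s'" "sat M b s = sat M b s'" using Imp by (intro Imp.IH; auto)+
  then show ?case by simp
qed auto

lemma sat_cong_Mof: "(\<forall>x\<in>FV a. s x = s' x) \<Longrightarrow> sat (M_of S) a s = sat (M_of S) a s'"
proof (induction a arbitrary: s s')
  case (Eq t u) then show ?case using evt_cong by (metis FV.simps(1) UnCI sat.simps(1))
next
  case (All x a)
  have "\<And>d. sat (M_of S) a (s(x := d)) = sat (M_of S) a (s'(x := d))"
    using All by (intro All.IH) auto
  then show ?case by simp
next
  case (K a)
  then have "assigned a s = assigned a s'" unfolding assigned_def
    by (intro substs_cong) auto
  then show ?case by (simp add: M_of_def)
next
  case (Imp a b)
  have "sat (M_of S) a s = sat (M_of S) a s'" "sat (M_of S) b s = sat (M_of S) b s'" using Imp by (intro Imp.IH; auto)+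
  then show ?case by simp
qed auto

lemma sat_substs_kfree:
  "kfree a \<Longrightarrow> Qc \<sigma> a \<Longrightarrow> sat M (substs \<sigma> a) s = sat M a (\<lambda>y. evt M s (\<sigma> y))"
proof (induction a arbitrary: \<sigma> s)
  case (Eq t u) then show ?case by (simp add: evt_substt)
next
  case (Imp a b) then show ?case using Qc_Imp by (metis sat.simps(3) substs.simps(3) kfree.simps(3))
next
  case (All x a)
  have "sat M (substs (\<sigma>(x := Var x)) a) (s(x := d)) = sat M a ((\<lambda>y. evt M s (\<sigma> y))(x := d))" for d
  proof -
    have "sat M (substs (\<sigma>(x := Var x)) a) (s(x := d)) = sat M a (\<lambda>y. evt M (s(x := d)) ((\<sigma>(x := Var x)) y))"
    proof (rule All.IH)
      show "Qc (\<sigma>(x := Var x)) a" using Qc_All All.prems(2) by blast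
      show "kfree a" using All.prems(1) by simp
    qed
    also have "\<dots> = sat M a ((\<lambda>y. evt M s (\<sigma> y))(x := d))"
    proof (rule sat_cong_kfree)
      show "kfree a" using All by simp
      show "\<forall>y\<in>FV a. evt M (s(x := d)) ((\<sigma>(x := Var x)) y) = ((\<lambda>y. evt M s (\<sigma> y))(x := d)) y"
      proof
        fix y assume y: "y \<in> FV a"
        show "evt M (s(x := d)) ((\<sigma>(x := Var x)) y) = ((\<lambda>y. evt M s (\<sigma> y))(x := d)) y"
        proof (cases "y = x")
          case False
          then have "x \<notin> FVt (\<sigma> y)" using Qc_All2[OF All.prems(2) y] by simp
          then show ?thesis using False by (auto intro: evt_cong)
        qed simp
      qed
    qed
    finally show ?thesis .
  qed
  then show ?case by simp
qed auto

lemma substs_comp: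
  "Qc \<sigma> a \<Longrightarrow> substs \<tau> (substs \<sigma> a) = substs (\<lambda>y. substt \<tau> (\<sigma> y)) a"
proof (induction a arbitrary: \<sigma> \<tau>)
  case (Eq t u)
  have "substt \<tau> (substt \<sigma> t) = substt (\<lambda>y. substt \<tau> (\<sigma> y)) t" for t by (induction t) auto
  then show ?case by simp
next
  case (Imp a b) then show ?case using Qc_Imp by (metis substs.simps(3))
next
  case (All x a)
  have "substs (\<tau>(x := Var x)) (substs (\<sigma>(x := Var x)) a)
      = substs (\<lambda>y. substt (\<tau>(x := Var x)) ((\<sigma>(x := Var x)) y)) a"
    using All.IH Qc_All[OF All.prems] by blast
  also have "\<dots> = substs ((\<lambda>y. substt \<tau> (\<sigma> y))(x := Var x)) a"
  proof (rule substs_cong, intro ballI)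
    fix y assume y: "y \<in> FV a"
    show "substt (\<tau>(x := Var x)) ((\<sigma>(x := Var x)) y) = ((\<lambda>y. substt \<tau> (\<sigma> y))(x := Var x)) y"
    proof (cases "y = x")
      case False
      then have "x \<notin> FVt (\<sigma> y)" using Qc_All2[OF All.prems y] by simp
      then show ?thesis using False by (auto intro: substt_cong)
    qed simp
  qed
  finally show ?case by simp
qed auto

lemma Mof_fields[simp]:
  "univ (M_of S) = UNIV" "zer (M_of S) = 0" "suc (M_of S) = Suc" "pls (M_of S) = (+)"
  "tms (M_of S) = (*)" "kint (M_of S) = (\<lambda>a s. entails S (assigned a s))"
  by (auto simp: M_of_def)

lemma sat_Mof_All[simp]: "sat (M_of S) (All x a) s = (\<forall>d. sat (M_of S) a (s(x := d)))"
  by (simp add: M_of_def)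
lemma sat_Mof_K[simp]: "sat (M_of S) (K a) s = entails S (assigned a s)"
  by (simp add: M_of_def)

lemma simple_num: "simple t \<Longrightarrow> substt (\<lambda>x. num (s x)) t = num (evt (M_of S) s t)"
  by (induction t) auto

lemma evt_num_Mof[simp]: "evt (M_of S) s (num k) = k" by (induction k) auto

lemma sat_substs_Mof:
  "Qc \<sigma> a \<Longrightarrow> (\<forall>y. simple (\<sigma> y)) \<Longrightarrow>
   sat (M_of S) (substs \<sigma> a) s = sat (M_of S) a (\<lambda>y. evt (M_of S) s (\<sigma> y))"
proof (induction a arbitrary: \<sigma> s)
  case (Eq t u) then show ?case by (simp add: evt_substt)
next
  case (Imp a b) then show ?case using Qc_Imp by (metis sat.simps(3) substs.simps(3))
next
  case (Neg a) then show ?case by simp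
next
  case (K a)
  have "assigned (substs \<sigma> a) s = substs (\<lambda>y. substt (\<lambda>x. num (s x)) (\<sigma> y)) a"
    unfolding assigned_def using K by (simp add: substs_comp)
  also have "\<dots> = assigned a (\<lambda>y. evt (M_of S) s (\<sigma> y))"
    unfolding assigned_def using K simple_num by simp
  finally show ?case by simp
next
  case (All x a)
  have "sat (M_of S) (substs (\<sigma>(x := Var x)) a) (s(x := d)) = sat (M_of S) a ((\<lambda>y. evt (M_of S) s (\<sigma> y))(x := d))" for d
  proof -
    have "sat (M_of S) (substs (\<sigma>(x := Var x)) a) (s(x := d)) = sat (M_of S) a (\<lambda>y. evt (M_of S) (s(x := d)) ((\<sigma>(x := Var x)) y))"
    proof (rule All.IH)
      show "Qc (\<sigma>(x := Var x)) a" using Qc_All All.prems(1) by blast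
      show "\<forall>y. simple ((\<sigma>(x := Var x)) y)" using All.prems(2) by simp
    qed
    also have "\<dots> = sat (M_of S) a ((\<lambda>y. evt (M_of S) s (\<sigma> y))(x := d))"
    proof (rule sat_cong_Mof, intro ballI)
        fix y assume y: "y \<in> FV a"
        show "evt (M_of S) (s(x := d)) ((\<sigma>(x := Var x)) y) = ((\<lambda>y. evt (M_of S) s (\<sigma> y))(x := d)) y"
        proof (cases "y = x")
          case False
          then have "x \<notin> FVt (\<sigma> y)" using Qc_All2[OF All.prems(1) y] by simp
          then show ?thesis using False by (auto intro: evt_cong)
        qed simp
    qed
    finally show ?thesis .
  qed
  then show ?case by simp
qed

lemma sat_foldr_All:
  "(\<forall>s. is_assign M s \<longrightarrow> sat M a s) \<Longrightarrow> is_assign M s \<Longrightarrow> sat M (foldr All xs a) s"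
proof (induction xs arbitrary: s)
  case (Cons x xs)
  have "is_assign M (s(x := d))" if "d \<in> univ M" for d
    using Cons.prems(2) that by (auto simp: is_assign_def)
  then show ?case using Cons by simp
qed simp

lemma sat_uclose:
  "(\<forall>s. is_assign M s \<longrightarrow> sat M a s) \<Longrightarrow> is_assign M s \<Longrightarrow> sat M (uclose a) s"
  unfolding uclose_def by (rule sat_foldr_All)

lemma entails_mem: "a \<in> S \<Longrightarrow> entails S a"
  by (auto simp: entails_def models_def)

lemma entails_MP: "entails S (Imp a b) \<Longrightarrow> entails S a \<Longrightarrow> entails S b"
  by (auto simp: entails_def)

lemma is_assign_Mof[simp]: "is_assign (M_of S) s"
  by (simp add: is_assign_def)

lemma assigned_Imp[simp]: "assigned (Imp a b) s = Imp (assigned a s) (assigned b s)"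
  by (simp add: assigned_def)
lemma assigned_K[simp]: "assigned (K a) s = K (assigned a s)"
  by (simp add: assigned_def)

lemma evt_upd_fresh[simp]: "x \<notin> FVt t \<Longrightarrow> evt M (s(x := d)) t = evt M s t"
  by (rule evt_cong) auto

lemma delta0_kfree: "delta0 a \<Longrightarrow> kfree a"
  by (induction rule: delta0.induct) (auto simp: Exq_def)
lemma sigma1_kfree: "sigma1 a \<Longrightarrow> kfree a"
  by (induction rule: sigma1.induct) (auto simp: Exq_def delta0_kfree)

lemma sat_Exq[simp]: "sat M (Exq x a) s = (\<exists>d\<in>univ M. sat M a (s(x := d)))"
  by (simp add: Exq_def)
lemma sat_And[simp]: "sat M (And a b) s = (sat M a s \<and> sat M b s)"
  by (simp add: And_def)
lemma sat_Iff[simp]: "sat M (Iff a b) s = (sat M a s \<longleftrightarrow> sat M b s)"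
  by (auto simp: Iff_def)

lemma memW_unfold:
  fixes WF t1 t2 t3
  defines "N \<equiv> Suc (Max ({0} \<union> vars WF \<union> FVt t1 \<union> FVt t2 \<union> FVt t3))"
  shows "memW WF t1 t2 t3 = Exq N (Exq (N+1) (Exq (N+2) (And (Eq (Var N) t1) (And (Eq (Var (N+1)) t2)
          (And (Eq (Var (N+2)) t3) (substs (Var(0 := Var N, 1 := Var (N+1), 2 := Var (N+2))) WF))))))"
     and "\<forall>z\<in>vars WF \<union> FVt t1 \<union> FVt t2 \<union> FVt t3. z < N"
proof -
  show "memW WF t1 t2 t3 = Exq N (Exq (N+1) (Exq (N+2) (And (Eq (Var N) t1) (And (Eq (Var (N+1)) t2)
          (And (Eq (Var (N+2)) t3) (substs (Var(0 := Var N, 1 := Var (N+1), 2 := Var (N+2))) WF))))))"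
    unfolding memW_def Let_def N_def by simp
  have fin: "finite ({0} \<union> vars WF \<union> FVt t1 \<union> FVt t2 \<union> FVt t3)" by simp
  show "\<forall>z\<in>vars WF \<union> FVt t1 \<union> FVt t2 \<union> FVt t3. z < N"
  proof
    fix z assume "z \<in> vars WF \<union> FVt t1 \<union> FVt t2 \<union> FVt t3"
    then have "z \<in> {0} \<union> vars WF \<union> FVt t1 \<union> FVt t2 \<union> FVt t3" by blast
    then have "z \<le> Max ({0} \<union> vars WF \<union> FVt t1 \<union> FVt t2 \<union> FVt t3)" using fin by (rule Max_ge[rotated])
    then show "z < N" unfolding N_def by simp
  qed
qed

lemma sat_memW:
  assumes kf: "kfree WF" and fv: "FV WF \<subseteq> {0,1,2}"
  shows "sat M (memW WF t1 t2 t3) s \<longleftrightarrow>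
    (evt M s t1 \<in> univ M \<and> evt M s t2 \<in> univ M \<and> evt M s t3 \<in> univ M \<and>
     sat M WF (s(0 := evt M s t1, 1 := evt M s t2, 2 := evt M s t3)))"
proof -
  define N where "N = Suc (Max ({0} \<union> vars WF \<union> FVt t1 \<union> FVt t2 \<union> FVt t3))"
  note U = memW_unfold(1)[of WF t1 t2 t3, folded N_def] memW_unfold(2)[of WF t1 t2 t3, folded N_def]
  define \<rho> where "\<rho> = Var(0 := Var N, 1 := Var (N+1), 2 := Var (N+2))"
  have f1: "N \<notin> FVt t1" "N+1 \<notin> FVt t1" "N+2 \<notin> FVt t1"
    "N \<notin> FVt t2" "N+1 \<notin> FVt t2" "N+2 \<notin> FVt t2"
    "N \<notin> FVt t3" "N+1 \<notin> FVt t3" "N+2 \<notin> FVt t3" using U(2) by fastforce+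
  have f2: "N \<notin> vars WF" "N+1 \<notin> vars WF" "N+2 \<notin> vars WF" using U(2) by fastforce+
  have Q: "Qc \<rho> WF" unfolding Qc_def \<rho>_def using fv f2 by auto
  have key: "sat M (substs \<rho> WF) s' = sat M WF (s'' (0 := s' N, 1 := s' (N+1), 2 := s' (N+2)))" for s' s''
  proof -
    have "sat M (substs \<rho> WF) s' = sat M WF (\<lambda>y. evt M s' (\<rho> y))"
      by (rule sat_substs_kfree[OF kf Q])
    also have "\<dots> = sat M WF (s'' (0 := s' N, 1 := s' (N+1), 2 := s' (N+2)))"
      by (rule sat_cong_kfree[OF kf]) (use fv in \<open>auto simp: \<rho>_def\<close>)
    finally show ?thesis .
  qed
  show ?thesis
    unfolding U(1) \<rho>_def[symmetric]
    using f1 by (auto simp: key[of _ s])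
qed

lemma Nstd_fields[simp]:
  "univ Nstd = UNIV" "zer Nstd = 0" "suc Nstd = Suc" "pls Nstd = (+)" "tms Nstd = (*)"
  by (auto simp: Nstd_def)

lemma sat_Mof_Nstd: "kfree a \<Longrightarrow> sat (M_of S) a s = sat Nstd a s"
proof (induction a arbitrary: s)
  case (Eq t u)
  have "evt (M_of S) s t = evt Nstd s t" for t by (induction t) auto
  then show ?case by simp
qed auto

lemma gnt_inj: "gnt t = gnt u \<Longrightarrow> t = u"
  by (induction t arbitrary: u; case_tac u; simp)
lemma gn_inj: "gn a = gn b \<Longrightarrow> a = b"
  by (induction a arbitrary: b; case_tac b; auto dest: gnt_inj)

lemma FV_memW: "FV WF \<subseteq> {0,1,2} \<Longrightarrow> FV (memW WF t1 t2 t3) \<subseteq> FVt t1 \<union> FVt t2 \<union> FVt t3"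
proof -
  assume fv: "FV WF \<subseteq> {0,1,2}"
  define N where "N = Suc (Max ({0} \<union> vars WF \<union> FVt t1 \<union> FVt t2 \<union> FVt t3))"
  note U = memW_unfold(1)[of WF t1 t2 t3, folded N_def]
  have "FV (substs (Var(0 := Var N, 1 := Var (N+1), 2 := Var (N+2))) WF) \<subseteq> {N, N+1, N+2}"
  proof -
    have "FVt ((Var(0 := Var N, 1 := Var (N+1), 2 := Var (N+2))) y) \<subseteq> {N, N+1, N+2}" if "y \<in> FV WF" for y
      using that fv by auto
    then show ?thesis using FV_substs[of "Var(0 := Var N, 1 := Var (N+1), 2 := Var (N+2))" WF] by blast
  qed
  then show ?thesis unfolding U by (auto simp: Exq_def And_def)
qed

lemma PA_Mof: "a \<in> PA \<Longrightarrow> sat (M_of S) a s"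
proof (unfold PA_def, elim UnE)
  assume "a \<in> {All 0 (Neg (Eq (Sc (Var 0)) Zero)),
         All 0 (All 1 (Imp (Eq (Sc (Var 0)) (Sc (Var 1))) (Eq (Var 0) (Var 1)))),
         All 0 (Eq (Pl (Var 0) Zero) (Var 0)),
         All 0 (All 1 (Eq (Pl (Var 0) (Sc (Var 1))) (Sc (Pl (Var 0) (Var 1))))),
         All 0 (Eq (Ml (Var 0) Zero) Zero),
         All 0 (All 1 (Eq (Ml (Var 0) (Sc (Var 1))) (Pl (Ml (Var 0) (Var 1)) (Var 0))))}"
  then show "sat (M_of S) a s" by (elim insertE emptyE) simp_all
next
  assume "a \<in> {uclose (Imp (subst x Zero b) (Imp (All x (Imp b (subst x (Sc (Var x)) b))) (All x b))) | b x. True}"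
  then obtain b x where a: "a = uclose (Imp (subst x Zero b) (Imp (All x (Imp b (subst x (Sc (Var x)) b))) (All x b)))" by blast
  have Q0: "Qc (Var(x := Zero)) b" and Q1: "Qc (Var(x := Sc (Var x))) b" by (auto simp: Qc_def)
  have s0: "sat (M_of S) (subst x Zero b) s' = sat (M_of S) b (s'(x := 0))" for s'
  proof -
    have "sat (M_of S) (subst x Zero b) s' = sat (M_of S) b (\<lambda>y. evt (M_of S) s' ((Var(x := Zero)) y))"
      unfolding subst_def by (rule sat_substs_Mof[OF Q0]) auto
    also have "(\<lambda>y. evt (M_of S) s' ((Var(x := Zero)) y)) = s'(x := 0)" by auto
    finally show ?thesis .
  qed
  have s1: "sat (M_of S) (subst x (Sc (Var x)) b) s' = sat (M_of S) b (s'(x := Suc (s' x)))" for s'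
  proof -
    have "sat (M_of S) (subst x (Sc (Var x)) b) s' = sat (M_of S) b (\<lambda>y. evt (M_of S) s' ((Var(x := Sc (Var x))) y))"
      unfolding subst_def by (rule sat_substs_Mof[OF Q1]) auto
    also have "(\<lambda>y. evt (M_of S) s' ((Var(x := Sc (Var x))) y)) = s'(x := Suc (s' x))" by auto
    finally show ?thesis .
  qed
  have ind: "sat (M_of S) b (s'(x := d))"
    if h0: "sat (M_of S) b (s'(x := 0))"
      and hs: "\<forall>d. sat (M_of S) b (s'(x := d)) \<longrightarrow> sat (M_of S) b (s'(x := Suc d))" for s' d
  proof (induction d)
    case 0 show ?case using h0 by (simp add: fun_upd_def)
  next
    case (Suc d)
    have "sat (M_of S) b (s'(x := d))" using Suc.IH by (simp only: fun_upd_def)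
    then have "sat (M_of S) b (s'(x := Suc d))" using hs by blast
    then show ?case by (simp only: fun_upd_def)
  qed
  have "sat (M_of S) (Imp (subst x Zero b) (Imp (All x (Imp b (subst x (Sc (Var x)) b))) (All x b))) s'" for s'
  proof -
    have "sat (M_of S) (All x (Imp b (subst x (Sc (Var x)) b))) s' = (\<forall>d. sat (M_of S) b (s'(x := d)) \<longrightarrow> sat (M_of S) b (s'(x := Suc d)))"
      by (simp only: sat_Mof_All sat.simps(3) s1 fun_upd_upd fun_upd_same)
    then show ?thesis using ind[of s'] by (simp only: sat.simps s0 sat_Mof_All) blast
  qed
  then show "sat (M_of S) a s" unfolding a by (intro sat_uclose allI impI is_assign_Mof)
qed

lemma assigned_subst0: "FV a \<subseteq> {0} \<Longrightarrow> assigned a (s(0 := d)) = subst 0 (num d) a"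
  unfolding assigned_def subst_def by (rule substs_cong) auto

lemma Ax3_Mof:
  assumes dW: "defines_W WF"
    and Wn: "W n = {prod_encode (m, gn a) | m a. FV a \<subseteq> {xv} \<and> entails (SigmaT WF n) (subst xv (num m) a)}"
    and a: "FV a \<subseteq> {0}"
  shows "sat (M_of (SigmaT WF n)) (All 0 (Iff (K a) (memW WF (Var 0) (num (gn a)) (num n)))) s"
proof -
  let ?S = "SigmaT WF n"
  have kf: "kfree WF" and fv: "FV WF \<subseteq> {0,1,2}" and ss: "\<And>s. sat Nstd WF s \<longleftrightarrow> prod_encode (s 0, s 1) \<in> W (s 2)"
    using dW sigma1_kfree unfolding defines_W_def by auto
  have "entails ?S (assigned a (s(0 := d))) \<longleftrightarrow> sat (M_of ?S) (memW WF (Var 0) (num (gn a)) (num n)) (s(0 := d))" for d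
  proof -
    have "sat (M_of ?S) (memW WF (Var 0) (num (gn a)) (num n)) (s(0 := d))
        \<longleftrightarrow> sat (M_of ?S) WF (s(0 := d, 0 := d, 1 := gn a, 2 := n))"
      using sat_memW[OF kf fv] by simp
    also have "\<dots> \<longleftrightarrow> sat Nstd WF (s(0 := d, 0 := d, 1 := gn a, 2 := n))"
      by (rule sat_Mof_Nstd[OF kf])
    also have "\<dots> \<longleftrightarrow> prod_encode (d, gn a) \<in> W n" using ss by simp
    also have "\<dots> \<longleftrightarrow> entails ?S (subst 0 (num d) a)"
      unfolding Wn using a by (auto dest: gn_inj)
    finally show ?thesis using assigned_subst0[OF a] by simp
  qed
  then show ?thesis by simp
qed

lemma FV_Iff[simp]: "FV (Iff a b) = FV a \<union> FV b" by (auto simp: Iff_def And_def)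

lemma simple_num_tm[simp]: "simple (num k)" by (induction k) auto

lemma AV_Mof:
  assumes str: "is_structure (M_of S)" and v: "valid a"
  shows "sat (M_of S) (assigned a s0) s"
proof -
  have Q: "Qc (\<lambda>x. num (s0 x)) a" by (simp add: Qc_def)
  have "sat (M_of S) (assigned a s0) s = sat (M_of S) a (\<lambda>y. evt (M_of S) s (num (s0 y)))"
    unfolding assigned_def by (rule sat_substs_Mof[OF Q]) simp
  also have "\<dots> = sat (M_of S) a s0" by simp
  finally show ?thesis using v str unfolding valid_def entails_def models_def by simp
qed

lemma main_assembly:
  assumes dW: "defines_W WF"
    and Wn: "W n = {prod_encode (m, gn a) | m a. FV a \<subseteq> {xv} \<and> entails (SigmaT WF n) (subst xv (num m) a)}"
    and str: "is_structure (M_of (SigmaT WF n))"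
    and E4h: "\<And>\<phi>. FV \<phi> = {} \<Longrightarrow> entails (SigmaT WF n) \<phi> \<Longrightarrow> entails (SigmaT WF n) (K \<phi>)"
  shows "models (M_of (SigmaT WF n)) (SigmaT WF n)"
proof -
  let ?S = "SigmaT WF n"
  let ?B = "E1 \<union> E2 \<union> E4 \<union> PA \<union> Ax3 WF n \<union> AV"
  have fvW: "FV WF \<subseteq> {0,1,2}" using dW unfolding defines_W_def by auto
  have closed: "FV b = {}" if "b \<in> ?B" for b
    using that
  proof (elim UnE)
    assume "b \<in> PA" then show ?thesis unfolding PA_def by auto
  next
    assume "b \<in> Ax3 WF n"
    then obtain a where b: "b = All xv (Iff (K a) (memW WF (Var xv) (num (gn a)) (num n)))" and a: "FV a \<subseteq> {xv}"
      unfolding Ax3_def by blast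
    have "FV (memW WF (Var xv) (num (gn a)) (num n)) \<subseteq> {xv}" using FV_memW[OF fvW] by fastforce
    then show ?thesis using a b by auto
  qed (auto simp: E1_def E2_def E4_def AV_def)
  have base: "sat (M_of ?S) b s" if "b \<in> ?B" for b s
    using that
  proof (elim UnE)
    assume "b \<in> E1"
    then obtain a where b: "b = uclose (K a)" and v: "valid a" unfolding E1_def by blast
    have "assigned a s' \<in> ?S" for s'
    proof -
      have "assigned a s' \<in> AV" using v unfolding AV_def by blast
      then have "(K ^^ 0) (assigned a s') \<in> ?S" unfolding SigmaT_def by blast
      then show ?thesis by simp
    qed
    then show ?thesis unfolding b by (intro sat_uclose) (auto intro: entails_mem)
  next
    assume "b \<in> E2"
    then obtain a c where b: "b = uclose (Imp (K (Imp a c)) (Imp (K a) (K c)))" unfolding E2_def by blast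
    show ?thesis unfolding b by (intro sat_uclose) (auto intro: entails_MP)
  next
    assume "b \<in> E4"
    then obtain a where b: "b = uclose (Imp (K a) (K (K a)))" unfolding E4_def by blast
    show ?thesis unfolding b by (intro sat_uclose) (auto intro: E4h)
  next
    assume "b \<in> PA" then show ?thesis by (rule PA_Mof)
  next
    assume "b \<in> Ax3 WF n"
    then obtain a where b: "b = All xv (Iff (K a) (memW WF (Var xv) (num (gn a)) (num n)))" and a: "FV a \<subseteq> {xv}"
      unfolding Ax3_def by blast
    show ?thesis unfolding b by (rule Ax3_Mof[OF dW Wn a])
  next
    assume "b \<in> AV"
    then obtain a s0 where b: "b = assigned a s0" and v: "valid a" unfolding AV_def by blast
    show ?thesis unfolding b by (rule AV_Mof[OF str v])
  qed
  show ?thesis unfolding models_def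
  proof (intro ballI allI impI)
    fix c s assume "c \<in> ?S"
    then obtain b j where c: "c = (K ^^ j) b" and b: "b \<in> ?B" unfolding SigmaT_def by blast
    show "sat (M_of ?S) c s"
    proof (cases j)
      case 0 then show ?thesis using base[OF b] c by simp
    next
      case (Suc i)
      have "(K ^^ i) b \<in> ?S" unfolding SigmaT_def using b by blast
      moreover have "assigned ((K ^^ i) b) s = (K ^^ i) b"
        by (rule assigned_closed) (simp add: closed[OF b])
      ultimately show ?thesis using c Suc by (simp add: entails_mem)
    qed
  qed
qed

fun bnd :: "fm \<Rightarrow> nat set" where
  "bnd (Eq t u) = {}"
| "bnd (Neg a) = bnd a"
| "bnd (Imp a b) = bnd a \<union> bnd b"
| "bnd (All x a) = insert x (bnd a)"
| "bnd (K a) = bnd a"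

lemma bnd_substs[simp]: "bnd (substs \<sigma> a) = bnd a"
  by (induction a arbitrary: \<sigma>) auto
lemma bnd_vars: "bnd a \<subseteq> vars a"
  by (induction a) auto

lemma substitutable_fresh: "w \<notin> bnd a \<Longrightarrow> substitutable (Var w) u a"
  by (induction a) auto

lemma substs_subst:
  "substitutable (Var y0) x0 a \<Longrightarrow> substs \<tau> (subst x0 (Var y0) a) = substs (\<tau>(x0 := \<tau> y0)) a"
proof (induction a arbitrary: \<tau>)
  case (Eq t u)
  have "substt \<tau> (substt (Var(x0 := Var y0)) t) = substt (\<tau>(x0 := \<tau> y0)) t" for t
    by (induction t) auto
  then show ?case by (simp only: subst_def substs.simps)
next
  case (Neg a) then show ?case by (simp add: subst_def)
next
  case (Imp a b) then show ?case by (simp add: subst_def)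
next
  case (K a) then show ?case by (simp add: subst_def)
next
  case (All x a)
  show ?case
  proof (cases "x0 \<in> FV (All x a)")
    case False
    have "subst x0 (Var y0) (All x a) = substs Var (All x a)"
      unfolding subst_def by (rule substs_cong) (use False in auto)
    moreover have "substs \<tau> (All x a) = substs (\<tau>(x0 := \<tau> y0)) (All x a)"
      by (rule substs_cong) (use False in auto)
    ultimately show ?thesis by (simp only: substs_Var)
  next
    case True
    with All.prems have xy: "x \<noteq> y0" "x \<noteq> x0" and sa: "substitutable (Var y0) x0 a" by auto
    have e1: "(Var(x0 := Var y0))(x := Var x) = Var(x0 := Var y0)" using xy by (auto simp: fun_eq_iff)
    have e2: "(\<tau>(x := Var x))(x0 := (\<tau>(x := Var x)) y0) = (\<tau>(x0 := \<tau> y0))(x := Var x)"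
      using xy by (auto simp: fun_eq_iff)
    have "subst x0 (Var y0) (All x a) = All x (subst x0 (Var y0) a)"
      unfolding subst_def using e1 by simp
    then have "substs \<tau> (subst x0 (Var y0) (All x a)) = All x (substs (\<tau>(x := Var x)) (subst x0 (Var y0) a))"
      by simp
    also have "\<dots> = All x (substs ((\<tau>(x := Var x))(x0 := (\<tau>(x := Var x)) y0)) a)"
      by (simp only: All.IH[OF sa])
    also have "\<dots> = substs (\<tau>(x0 := \<tau> y0)) (All x a)" using e2 by simp
    finally show ?thesis .
  qed
qed

lemma assigned_subst_var:
  "substitutable (Var y) x a \<Longrightarrow> assigned (subst x (Var y) a) s = assigned a (s(x := s y))"
proof -
  assume sa: "substitutable (Var y) x a"
  have "(\<lambda>z. num (s z))(x := num (s y)) = (\<lambda>z. num ((s(x := s y)) z))" by auto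
  then show ?thesis unfolding assigned_def substs_subst[OF sa] by simp
qed

lemma alpha_var_Cons:
  "alpha_var (x # B1) (y # B2) u v \<longleftrightarrow> (u = x \<and> v = y) \<or> (u \<noteq> x \<and> v \<noteq> y \<and> alpha_var B1 B2 u v)"
  unfolding alpha_var_def by (cases "idx B1 u"; cases "idx B2 v") auto

lemma alpha_var_Nil[simp]: "alpha_var [] [] u v \<longleftrightarrow> u = v"
  unfolding alpha_var_def by simp

lemma alpha_tm_substt:
  "alpha_tm B1 B2 t u \<Longrightarrow> (\<forall>x y. alpha_var B1 B2 x y \<longrightarrow> alpha_tm C1 C2 (\<sigma>1 x) (\<sigma>2 y))
   \<Longrightarrow> alpha_tm C1 C2 (substt \<sigma>1 t) (substt \<sigma>2 u)"
  by (induction t arbitrary: u; case_tac u; simp)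

lemma alpha_tm_weak:
  "alpha_tm C1 C2 t u \<Longrightarrow> x \<notin> FVt t \<Longrightarrow> y \<notin> FVt u \<Longrightarrow> alpha_tm (x # C1) (y # C2) t u"
  by (induction t arbitrary: u; case_tac u; auto simp: alpha_var_Cons)

lemma alpha_fm_substs:
  "alpha_fm B1 B2 \<phi> \<psi> \<Longrightarrow> (\<forall>x y. alpha_var B1 B2 x y \<longrightarrow> alpha_tm C1 C2 (\<sigma>1 x) (\<sigma>2 y))
   \<Longrightarrow> (\<forall>u. FVt (\<sigma>1 u) \<inter> vars \<phi> \<subseteq> {u}) \<Longrightarrow> (\<forall>u. FVt (\<sigma>2 u) \<inter> vars \<psi> \<subseteq> {u})
   \<Longrightarrow> alpha_fm C1 C2 (substs \<sigma>1 \<phi>) (substs \<sigma>2 \<psi>)"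
proof (induction \<phi> arbitrary: \<psi> B1 B2 C1 C2 \<sigma>1 \<sigma>2)
  case (Eq t t')
  then show ?case by (cases \<psi>) (auto intro: alpha_tm_substt)
next
  case (Neg a) then show ?case by (cases \<psi>) auto
next
  case (Imp a b)
  then obtain a' b' where \<psi>: "\<psi> = Imp a' b'" by (cases \<psi>) auto
  have "alpha_fm C1 C2 (substs \<sigma>1 a) (substs \<sigma>2 a')"
    by (rule Imp.IH(1)) (use Imp.prems \<psi> in auto)
  moreover have "alpha_fm C1 C2 (substs \<sigma>1 b) (substs \<sigma>2 b')"
    by (rule Imp.IH(2)) (use Imp.prems \<psi> in auto)
  ultimately show ?case using \<psi> by simp
next
  case (K a) then show ?case by (cases \<psi>) auto
next
  case (All x a)
  then obtain y b where \<psi>: "\<psi> = All y b" by (cases \<psi>) auto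
  have al: "alpha_fm (x # B1) (y # B2) a b" using All.prems(1) \<psi> by simp
  have H: "\<forall>u v. alpha_var (x # B1) (y # B2) u v \<longrightarrow>
     alpha_tm (x # C1) (y # C2) ((\<sigma>1(x := Var x)) u) ((\<sigma>2(y := Var y)) v)"
  proof (intro allI impI)
    fix u v assume "alpha_var (x # B1) (y # B2) u v"
    then consider "u = x" "v = y" | "u \<noteq> x" "v \<noteq> y" "alpha_var B1 B2 u v"
      unfolding alpha_var_Cons by blast
    then show "alpha_tm (x # C1) (y # C2) ((\<sigma>1(x := Var x)) u) ((\<sigma>2(y := Var y)) v)"
    proof cases
      case 1 then show ?thesis by (simp add: alpha_var_Cons)
    next
      case 2
      have "x \<notin> FVt (\<sigma>1 u)" using All.prems(3) 2 by auto
      moreover have "y \<notin> FVt (\<sigma>2 v)" using All.prems(4) 2 \<psi> by auto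
      ultimately show ?thesis using All.prems(2) 2 by (auto intro: alpha_tm_weak)
    qed
  qed
  have "alpha_fm (x # C1) (y # C2) (substs (\<sigma>1(x := Var x)) a) (substs (\<sigma>2(y := Var y)) b)"
  proof (rule All.IH[OF al H])
    show "\<forall>u. FVt ((\<sigma>1(x := Var x)) u) \<inter> vars a \<subseteq> {u}" using All.prems(3) by auto
    show "\<forall>u. FVt ((\<sigma>2(y := Var y)) u) \<inter> vars b \<subseteq> {u}" using All.prems(4) \<psi> by auto
  qed
  then show ?case using \<psi> by simp
qed

lemma alpha_tm_FV:
  "alpha_tm b1 b2 t t' \<Longrightarrow> u \<in> FVt t' \<Longrightarrow> \<exists>x\<in>FVt t. alpha_var b1 b2 x u"
  by (induction t arbitrary: t'; case_tac t'; auto)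

lemma alpha_fm_FV:
  "alpha_fm b1 b2 \<phi> \<psi> \<Longrightarrow> u \<in> FV \<psi> \<Longrightarrow> \<exists>x\<in>FV \<phi>. alpha_var b1 b2 x u"
proof (induction \<phi> arbitrary: \<psi> b1 b2)
  case (Eq t t')
  then show ?case by (cases \<psi>) (auto dest: alpha_tm_FV)
next
  case (Neg a) then show ?case by (cases \<psi>) auto
next
  case (Imp a b)
  then obtain a' b' where \<psi>: "\<psi> = Imp a' b'" by (cases \<psi>) auto
  then have "u \<in> FV a' \<or> u \<in> FV b'" using Imp.prems by auto
  then show ?case
  proof
    assume "u \<in> FV a'" then show ?case using Imp.IH(1)[of b1 b2 a'] Imp.prems \<psi> by auto
  next
    assume "u \<in> FV b'" then show ?case using Imp.IH(2)[of b1 b2 b'] Imp.prems \<psi> by auto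
  qed
next
  case (K a) then show ?case by (cases \<psi>) auto
next
  case (All x a)
  then obtain y b where \<psi>: "\<psi> = All y b" by (cases \<psi>) auto
  have al: "alpha_fm (x # b1) (y # b2) a b" and u: "u \<in> FV b" "u \<noteq> y" using All.prems \<psi> by auto
  obtain x' where x': "x' \<in> FV a" "alpha_var (x # b1) (y # b2) x' u" using All.IH[OF al u(1)] by blast
  then have "x' \<noteq> x" "alpha_var b1 b2 x' u" using u(2) unfolding alpha_var_Cons by auto
  then show ?case using x' by auto
qed

lemma str_a:
  assumes "is_structure M" "is_assign M s" "is_assign M s'" "\<forall>x\<in>FV a. s x = s' x"
  shows "kint M a s = kint M a s'"
proof -
  have "\<forall>a s s'. is_assign M s \<longrightarrow> is_assign M s' \<longrightarrow> (\<forall>x\<in>FV a. s x = s' x) \<longrightarrow> kint M a s = kint M a s'"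
    using assms(1) unfolding is_structure_def by - (elim conjE, assumption)
  then show ?thesis using assms(2-4) by blast
qed
lemma str_b:
  assumes "is_structure M" "is_assign M s" "alphabetic_variant a b"
  shows "kint M a s = kint M b s"
proof -
  have "\<forall>a b s. is_assign M s \<longrightarrow> alphabetic_variant a b \<longrightarrow> kint M a s = kint M b s"
    using assms(1) unfolding is_structure_def by - (elim conjE, assumption)
  then show ?thesis using assms(2-3) by blast
qed
lemma str_c:
  assumes "is_structure M" "is_assign M s" "substitutable (Var y) x a"
  shows "kint M (subst x (Var y) a) s = kint M a (s(x := s y))"
proof -
  have "\<forall>a x y s. is_assign M s \<longrightarrow> substitutable (Var y) x a \<longrightarrow>
        kint M (subst x (Var y) a) s = kint M a (s(x := s y))"
    using assms(1) unfolding is_structure_def by - (elim conjE, assumption)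
  then show ?thesis using assms(2-3) by blast
qed

lemma is_assign_upd: "is_assign M s \<Longrightarrow> d \<in> univ M \<Longrightarrow> is_assign M (s(x := d))"
  by (auto simp: is_assign_def)

lemma kint_rename:
  assumes str: "is_structure M" and fin: "finite D"
  shows "(\<forall>u\<in>D. r u \<notin> vars \<phi> \<and> r u \<notin> D) \<Longrightarrow> is_assign M t \<Longrightarrow>
    kint M (substs (\<lambda>u. if u \<in> D then Var (r u) else Var u) \<phi>) t = kint M \<phi> (\<lambda>u. if u \<in> D then t (r u) else t u)"
  using fin
proof (induction D arbitrary: t rule: finite_induct)
  case empty
  have "(\<lambda>u. if u \<in> {} then Var (r u) else Var u) = Var" by auto
  then show ?case by simp
next
  case (insert u D)
  let ?s' = "\<lambda>v. if v \<in> D then Var (r v) else Var v"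
  let ?s = "\<lambda>v. if v \<in> insert u D then Var (r v) else Var v"
  have Q: "Qc ?s' \<phi>" using insert.prems(1) by (auto simp: Qc_def)
  have fe: "?s = (\<lambda>y. substt (Var(u := Var (r u))) (?s' y))"
    using insert.prems(1) insert.hyps(2) by (auto simp: fun_eq_iff)
  have eq: "substs ?s \<phi> = subst u (Var (r u)) (substs ?s' \<phi>)"
    unfolding subst_def substs_comp[OF Q] fe ..
  have sb: "substitutable (Var (r u)) u (substs ?s' \<phi>)"
    by (rule substitutable_fresh) (use bnd_vars insert.prems(1) in auto)
  have "kint M (substs ?s \<phi>) t = kint M (substs ?s' \<phi>) (t(u := t (r u)))"
    unfolding eq by (rule str_c[OF str insert.prems(2) sb])
  also have "\<dots> = kint M \<phi> (\<lambda>v. if v \<in> D then (t(u := t (r u))) (r v) else (t(u := t (r u))) v)"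
  proof (rule insert.IH)
    show "\<forall>v\<in>D. r v \<notin> vars \<phi> \<and> r v \<notin> D" using insert.prems(1) by auto
    show "is_assign M (t(u := t (r u)))" using insert.prems(2) by (auto simp: is_assign_def)
  qed
  also have "(\<lambda>v. if v \<in> D then (t(u := t (r u))) (r v) else (t(u := t (r u))) v)
           = (\<lambda>v. if v \<in> insert u D then t (r v) else t v)"
    using insert.prems(1) insert.hyps(2) by (auto simp: fun_eq_iff)
  finally show ?case .
qed

lemma idx_None: "idx e u = None \<longleftrightarrow> u \<notin> set e"
  by (induction e) auto
lemma idx_Some: "idx e u = Some i \<Longrightarrow> i < length e \<and> e ! i = u"
  by (induction e arbitrary: i) (auto split: if_splits)

lemma kint_alpha:
  assumes str: "is_structure M" and al: "alpha_fm e1 e2 \<phi> \<psi>"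
    and t1: "is_assign M t1" and t2: "is_assign M t2"
    and cp: "\<forall>x y. alpha_var e1 e2 x y \<longrightarrow> t1 x = t2 y"
  shows "kint M \<phi> t1 = kint M \<psi> t2"
proof -
  define V where "V = insert 0 (vars \<phi> \<union> vars \<psi> \<union> set e1 \<union> set e2)"
  define N where "N = Suc (Max V)"
  have finV: "finite V" unfolding V_def by simp
  have VN: "z < N" if "z \<in> V" for z
    using Max_ge[OF finV that] unfolding N_def by simp
  have v1: "z \<in> vars \<phi> \<Longrightarrow> z < N" "z \<in> vars \<psi> \<Longrightarrow> z < N" "z \<in> set e1 \<Longrightarrow> z < N" "z \<in> set e2 \<Longrightarrow> z < N" for z
    using VN unfolding V_def by auto
  define r1 where "r1 = (\<lambda>u. N + the (idx e1 u))"
  define r2 where "r2 = (\<lambda>u. N + the (idx e2 u))"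
  define T1 where "T1 = (\<lambda>w. if N \<le> w then t1 (e1 ! (w - N)) else t1 w)"
  define T2 where "T2 = (\<lambda>w. if N \<le> w then t2 (e2 ! (w - N)) else t2 w)"
  define \<sigma>1 where "\<sigma>1 = (\<lambda>u. if u \<in> set e1 then Var (r1 u) else Var u)"
  define \<sigma>2 where "\<sigma>2 = (\<lambda>u. if u \<in> set e2 then Var (r2 u) else Var u)"
  have T1a: "is_assign M T1" using t1 unfolding T1_def is_assign_def by auto
  have T2a: "is_assign M T2" using t2 unfolding T2_def is_assign_def by auto
  have r1ge: "N \<le> r1 u" for u unfolding r1_def by simp
  have r2ge: "N \<le> r2 u" for u unfolding r2_def by simp
  have A: "kint M \<phi> t1 = kint M (substs \<sigma>1 \<phi>) T1"
  proof -
    have "kint M (substs \<sigma>1 \<phi>) T1 = kint M \<phi> (\<lambda>u. if u \<in> set e1 then T1 (r1 u) else T1 u)"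
      unfolding \<sigma>1_def
    proof (rule kint_rename[OF str])
      show "finite (set e1)" by simp
      show "is_assign M T1" by (rule T1a)
      show "\<forall>u\<in>set e1. r1 u \<notin> vars \<phi> \<and> r1 u \<notin> set e1"
      proof (intro ballI conjI notI)
        fix u assume "r1 u \<in> vars \<phi>" then show False using r1ge[of u] v1(1)[of "r1 u"] by simp
      next
        fix u assume "r1 u \<in> set e1" then show False using r1ge[of u] v1(3)[of "r1 u"] by simp
      qed
    qed
    also have "\<dots> = kint M \<phi> t1"
    proof (rule str_a[OF str _ t1])
      show "is_assign M (\<lambda>u. if u \<in> set e1 then T1 (r1 u) else T1 u)"
        using T1a by (auto simp: is_assign_def)
      show "\<forall>x\<in>FV \<phi>. (if x \<in> set e1 then T1 (r1 x) else T1 x) = t1 x"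
      proof
        fix x assume x: "x \<in> FV \<phi>"
        show "(if x \<in> set e1 then T1 (r1 x) else T1 x) = t1 x"
        proof (cases "x \<in> set e1")
          case True
          then obtain i where i: "idx e1 x = Some i" using idx_None by (cases "idx e1 x") auto
          then show ?thesis using True idx_Some[OF i] by (simp add: T1_def r1_def)
        next
          case False
          have "x < N" using x FV_vars v1(1) by blast
          then show ?thesis using False by (simp add: T1_def)
        qed
      qed
    qed
    finally show ?thesis by simp
  qed
  have E: "kint M \<psi> t2 = kint M (substs \<sigma>2 \<psi>) T2"
  proof -
    have "kint M (substs \<sigma>2 \<psi>) T2 = kint M \<psi> (\<lambda>u. if u \<in> set e2 then T2 (r2 u) else T2 u)"
      unfolding \<sigma>2_def
    proof (rule kint_rename[OF str])
      show "finite (set e2)" by simp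
      show "is_assign M T2" by (rule T2a)
      show "\<forall>u\<in>set e2. r2 u \<notin> vars \<psi> \<and> r2 u \<notin> set e2"
      proof (intro ballI conjI notI)
        fix u assume "r2 u \<in> vars \<psi>" then show False using r2ge[of u] v1(2)[of "r2 u"] by simp
      next
        fix u assume "r2 u \<in> set e2" then show False using r2ge[of u] v1(4)[of "r2 u"] by simp
      qed
    qed
    also have "\<dots> = kint M \<psi> t2"
    proof (rule str_a[OF str _ t2])
      show "is_assign M (\<lambda>u. if u \<in> set e2 then T2 (r2 u) else T2 u)"
        using T2a by (auto simp: is_assign_def)
      show "\<forall>x\<in>FV \<psi>. (if x \<in> set e2 then T2 (r2 x) else T2 x) = t2 x"
      proof
        fix x assume x: "x \<in> FV \<psi>"
        show "(if x \<in> set e2 then T2 (r2 x) else T2 x) = t2 x"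
        proof (cases "x \<in> set e2")
          case True
          then obtain i where i: "idx e2 x = Some i" using idx_None by (cases "idx e2 x") auto
          then show ?thesis using True idx_Some[OF i] by (simp add: T2_def r2_def)
        next
          case False
          have "x < N" using x FV_vars v1(2) by blast
          then show ?thesis using False by (simp add: T2_def)
        qed
      qed
    qed
    finally show ?thesis by simp
  qed
  have B: "alpha_fm [] [] (substs \<sigma>1 \<phi>) (substs \<sigma>2 \<psi>)"
  proof (rule alpha_fm_substs[OF al])
    show "\<forall>x y. alpha_var e1 e2 x y \<longrightarrow> alpha_tm [] [] (\<sigma>1 x) (\<sigma>2 y)"
    proof (intro allI impI)
      fix x y assume xy: "alpha_var e1 e2 x y"
      show "alpha_tm [] [] (\<sigma>1 x) (\<sigma>2 y)"
      proof (cases "idx e1 x")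
        case None
        have y: "idx e2 y = None" "x = y" using xy None unfolding alpha_var_def by auto
        have "x \<notin> set e1" using None idx_None by metis
        moreover have "y \<notin> set e2" using y(1) idx_None by metis
        ultimately show ?thesis using y(2) unfolding \<sigma>1_def \<sigma>2_def by simp
      next
        case (Some i)
        have y: "idx e2 y = Some i" using xy Some unfolding alpha_var_def by simp
        have "x \<in> set e1" using Some idx_None by (metis option.distinct(1))
        moreover have "y \<in> set e2" using y idx_None by (metis option.distinct(1))
        ultimately show ?thesis using Some y unfolding \<sigma>1_def \<sigma>2_def r1_def r2_def by simp
      qed
    qed
    show "\<forall>u. FVt (\<sigma>1 u) \<inter> vars \<phi> \<subseteq> {u}"
    proof (intro allI subsetI)
      fix u z assume z: "z \<in> FVt (\<sigma>1 u) \<inter> vars \<phi>"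
      show "z \<in> {u}"
      proof (cases "u \<in> set e1")
        case True
        then have "z = r1 u" using z unfolding \<sigma>1_def by simp
        then show ?thesis using z r1ge[of u] v1(1)[of z] by simp
      qed (use z in \<open>simp add: \<sigma>1_def\<close>)
    qed
    show "\<forall>u. FVt (\<sigma>2 u) \<inter> vars \<psi> \<subseteq> {u}"
    proof (intro allI subsetI)
      fix u z assume z: "z \<in> FVt (\<sigma>2 u) \<inter> vars \<psi>"
      show "z \<in> {u}"
      proof (cases "u \<in> set e2")
        case True
        then have "z = r2 u" using z unfolding \<sigma>2_def by simp
        then show ?thesis using z r2ge[of u] v1(2)[of z] by simp
      qed (use z in \<open>simp add: \<sigma>2_def\<close>)
    qed
  qed
  have C: "kint M (substs \<sigma>1 \<phi>) T1 = kint M (substs \<sigma>2 \<psi>) T1"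
    by (rule str_b[OF str T1a]) (use B in \<open>simp add: alphabetic_variant_def\<close>)
  have D: "kint M (substs \<sigma>2 \<psi>) T1 = kint M (substs \<sigma>2 \<psi>) T2"
  proof (rule str_a[OF str T1a T2a], intro ballI)
    fix v assume "v \<in> FV (substs \<sigma>2 \<psi>)"
    then obtain u where u: "u \<in> FV \<psi>" and vu: "v \<in> FVt (\<sigma>2 u)" using FV_substs by blast
    obtain x where x: "x \<in> FV \<phi>" and axu: "alpha_var e1 e2 x u" using alpha_fm_FV[OF al u] by blast
    have txu: "t1 x = t2 u" using cp axu by blast
    show "T1 v = T2 v"
    proof (cases "idx e2 u")
      case None
      then have "idx e1 x = None" "x = u" using axu unfolding alpha_var_def by auto
      moreover have "u \<notin> set e2" using None idx_None by simp
      moreover have "u < N" using u FV_vars v1(2) by blast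
      ultimately have vv: "v = u" "x = u" "\<not> N \<le> u" using vu unfolding \<sigma>2_def by auto
      show ?thesis using txu unfolding vv T1_def T2_def using vv(3) by simp
    next
      case (Some i)
      then have i1: "idx e1 x = Some i" using axu unfolding alpha_var_def by simp
      have "u \<in> set e2" using Some idx_None by (metis option.distinct(1))
      then have "v = N + i" using vu Some unfolding \<sigma>2_def r2_def by simp
      moreover have "e1 ! i = x" "e2 ! i = u" using idx_Some[OF Some] idx_Some[OF i1] by auto
      ultimately show ?thesis using txu unfolding T1_def T2_def by simp
    qed
  qed
  show ?thesis using A C D E by simp
qed

lemma evt_alpha:
  "alpha_tm e1 e2 t u \<Longrightarrow> (\<forall>x y. alpha_var e1 e2 x y \<longrightarrow> t1 x = t2 y) \<Longrightarrow> evt M t1 t = evt M t2 u"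
  by (induction t arbitrary: u; case_tac u; auto)

lemma alpha_sat:
  assumes str: "is_structure M"
  shows "alpha_fm e1 e2 \<phi> \<psi> \<Longrightarrow> is_assign M t1 \<Longrightarrow> is_assign M t2 \<Longrightarrow>
    (\<forall>x y. alpha_var e1 e2 x y \<longrightarrow> t1 x = t2 y) \<Longrightarrow> sat M \<phi> t1 = sat M \<psi> t2"
proof (induction \<phi> arbitrary: \<psi> e1 e2 t1 t2)
  case (Eq t t')
  then obtain u u' where \<psi>: "\<psi> = Eq u u'" by (cases \<psi>) auto
  then show ?case using Eq evt_alpha by (metis alpha_fm.simps(1) sat.simps(1))
next
  case (Neg a)
  then obtain b where \<psi>: "\<psi> = Neg b" by (cases \<psi>) auto
  then show ?case using Neg by simp
next
  case (Imp a b)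
  then obtain a' b' where \<psi>: "\<psi> = Imp a' b'" by (cases \<psi>) auto
  have "sat M a t1 = sat M a' t2" by (rule Imp.IH(1)) (use Imp.prems \<psi> in auto)
  moreover have "sat M b t1 = sat M b' t2" by (rule Imp.IH(2)) (use Imp.prems \<psi> in auto)
  ultimately show ?case using \<psi> by simp
next
  case (K a)
  then obtain b where \<psi>: "\<psi> = K b" by (cases \<psi>) auto
  then show ?case using kint_alpha[OF str] K.prems by simp
next
  case (All x a)
  then obtain y b where \<psi>: "\<psi> = All y b" by (cases \<psi>) auto
  have "sat M a (t1(x := d)) = sat M b (t2(y := d))" if d: "d \<in> univ M" for d
  proof (rule All.IH)
    show "alpha_fm (x # e1) (y # e2) a b" using All.prems \<psi> by simp
    show "is_assign M (t1(x := d))" "is_assign M (t2(y := d))"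
      using All.prems d by (auto simp: is_assign_def)
    show "\<forall>u v. alpha_var (x # e1) (y # e2) u v \<longrightarrow> (t1(x := d)) u = (t2(y := d)) v"
      using All.prems(4) unfolding alpha_var_Cons by auto
  qed
  then show ?case using \<psi> by simp
qed

lemma alpha_tm_closed: "FVt t = {} \<Longrightarrow> alpha_tm e1 e2 t t"
  by (induction t) auto

lemma Mof_alpha:
  assumes "alphabetic_variant a b"
  shows "kint (M_of S) a s = kint (M_of S) b s"
proof -
  have al: "alpha_fm [] [] a b" using assms by (simp add: alphabetic_variant_def)
  have al2: "alpha_fm [] [] (assigned a s) (assigned b s)"
    unfolding assigned_def by (rule alpha_fm_substs[OF al]) (auto intro: alpha_tm_closed)
  have "sat M (assigned a s) t = sat M (assigned b s) t" if "is_structure M" "is_assign M t" for M t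
    by (rule alpha_sat[OF that(1) al2 that(2) that(2)]) simp
  then have "entails S (assigned a s) = entails S (assigned b s)"
    unfolding entails_def by blast
  then show ?thesis by simp
qed

lemma Mof_cong:
  assumes "\<forall>x\<in>FV a. s x = s' x"
  shows "kint (M_of S) a s = kint (M_of S) a s'"
proof -
  have "assigned a s = assigned a s'" unfolding assigned_def by (rule substs_cong) (use assms in auto)
  then show ?thesis by simp
qed

lemma Mof_substc:
  assumes "substitutable (Var y) x a"
  shows "kint (M_of S) (subst x (Var y) a) s = kint (M_of S) a (s(x := s y))"
  using assms by (simp add: assigned_subst_var)

lemma Mof_structure: "is_structure (M_of S)"
  unfolding is_structure_def using Mof_alpha Mof_cong Mof_substc by auto

fun numM :: "str \<Rightarrow> nat \<Rightarrow> nat" where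
  "numM M 0 = zer M"
| "numM M (Suc k) = suc M (numM M k)"

lemma evt_num: "evt M s (num k) = numM M k" by (induction k) auto

locale PAmod =
  fixes M :: str
  assumes str: "is_structure M"
    and pa: "\<And>a s. a \<in> PA \<Longrightarrow> is_assign M s \<Longrightarrow> sat M a s"
begin

definition s0 :: "nat \<Rightarrow> nat" where "s0 = (\<lambda>_. zer M)"

lemma zer_U[simp]: "zer M \<in> univ M" using str by (simp add: is_structure_def)
lemma suc_U[simp]: "d \<in> univ M \<Longrightarrow> suc M d \<in> univ M" using str by (simp add: is_structure_def)
lemma pls_U[simp]: "d \<in> univ M \<Longrightarrow> e \<in> univ M \<Longrightarrow> pls M d e \<in> univ M" using str by (simp add: is_structure_def)
lemma tms_U[simp]: "d \<in> univ M \<Longrightarrow> e \<in> univ M \<Longrightarrow> tms M d e \<in> univ M" using str by (simp add: is_structure_def)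
lemma numM_U[simp]: "numM M k \<in> univ M" by (induction k) auto

lemma s0a: "is_assign M s0" by (simp add: s0_def is_assign_def)

lemma paS: "a \<in> PA \<Longrightarrow> sat M a s0" using pa s0a by blast

lemma Q1: "d \<in> univ M \<Longrightarrow> suc M d \<noteq> zer M"
  using paS[of "All 0 (Neg (Eq (Sc (Var 0)) Zero))"] by (simp add: PA_def)
lemma Q2: "d \<in> univ M \<Longrightarrow> e \<in> univ M \<Longrightarrow> suc M d = suc M e \<Longrightarrow> d = e"
  using paS[of "All 0 (All 1 (Imp (Eq (Sc (Var 0)) (Sc (Var 1))) (Eq (Var 0) (Var 1))))"] by (simp add: PA_def)
lemma Q3: "d \<in> univ M \<Longrightarrow> pls M d (zer M) = d"
  using paS[of "All 0 (Eq (Pl (Var 0) Zero) (Var 0))"] by (simp add: PA_def)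
lemma Q4: "d \<in> univ M \<Longrightarrow> e \<in> univ M \<Longrightarrow> pls M d (suc M e) = suc M (pls M d e)"
  using paS[of "All 0 (All 1 (Eq (Pl (Var 0) (Sc (Var 1))) (Sc (Pl (Var 0) (Var 1)))))"] by (simp add: PA_def)
lemma Q5: "d \<in> univ M \<Longrightarrow> tms M d (zer M) = zer M"
  using paS[of "All 0 (Eq (Ml (Var 0) Zero) Zero)"] by (simp add: PA_def)
lemma Q6: "d \<in> univ M \<Longrightarrow> e \<in> univ M \<Longrightarrow> tms M d (suc M e) = pls M (tms M d e) d"
  using paS[of "All 0 (All 1 (Eq (Ml (Var 0) (Sc (Var 1))) (Pl (Ml (Var 0) (Var 1)) (Var 0))))"] by (simp add: PA_def)

lemma zero_or_suc: "d \<in> univ M \<Longrightarrow> d \<noteq> zer M \<Longrightarrow> \<exists>e\<in>univ M. d = suc M e"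
proof -
  assume d: "d \<in> univ M" "d \<noteq> zer M"
  define a where "a = Imp (Neg (Eq (Var 0) Zero)) (Exq 1 (Eq (Var 0) (Sc (Var 1))))"
  define I where "I = Imp (subst 0 Zero a) (Imp (All 0 (Imp a (subst 0 (Sc (Var 0)) a))) (All 0 a))"
  have "uclose I \<in> PA" unfolding PA_def I_def by blast
  moreover have "FV I = {}" unfolding I_def a_def by (auto simp: subst_def Exq_def)
  ultimately have "sat M I s0" using paS unfolding uclose_def by simp
  then have "\<forall>d\<in>univ M. d \<noteq> zer M \<longrightarrow> (\<exists>e\<in>univ M. d = suc M e)"
    unfolding I_def a_def by (simp add: subst_def Exq_def Q1; blast)
  then show ?thesis using d by blast
qed

lemma num_add: "numM M (a + b) = pls M (numM M a) (numM M b)"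
  by (induction b) (auto simp: Q3 Q4)
lemma num_mult: "numM M (a * b) = tms M (numM M a) (numM M b)"
proof (induction b)
  case 0 then show ?case by (simp add: Q5)
next
  case (Suc b)
  have "numM M (a * Suc b) = numM M (a * b + a)" by (simp add: add.commute)
  also have "\<dots> = pls M (numM M (a * b)) (numM M a)" by (rule num_add)
  also have "\<dots> = tms M (numM M a) (numM M (Suc b))" using Suc by (simp add: Q6)
  finally show ?case .
qed
lemma num_inj: "numM M a = numM M b \<Longrightarrow> a = b"
proof (induction a arbitrary: b)
  case 0 then show ?case using Q1[OF numM_U, of "b - 1"] by (cases b) auto
next
  case (Suc a)
  show ?case
  proof (cases b)
    case 0 then show ?thesis using Suc.prems Q1[OF numM_U, of a] by simp
  next
    case (Suc b')
    then have "numM M a = numM M b'" using Suc.prems Q2[OF numM_U numM_U] by simp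
    then show ?thesis using Suc.IH Suc by simp
  qed
qed

lemma bounded_aux: "\<forall>d\<in>univ M. \<forall>e\<in>univ M. pls M d e = numM M j \<longrightarrow> (\<exists>i\<le>j. d = numM M i)"
proof (induction j)
  case 0
  show ?case
  proof (intro ballI impI)
    fix d e assume de: "d \<in> univ M" "e \<in> univ M" "pls M d e = numM M 0"
    show "\<exists>i\<le>0. d = numM M i"
    proof (cases "e = zer M")
      case True then show ?thesis using de Q3 by simp
    next
      case False
      then obtain e' where "e' \<in> univ M" "e = suc M e'" using zero_or_suc de by blast
      then have "suc M (pls M d e') = zer M" using de Q4 by simp
      then show ?thesis using Q1[of "pls M d e'"] de \<open>e' \<in> univ M\<close> by simp
    qed
  qed
next
  case (Suc j)
  show ?case
  proof (intro ballI impI)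
    fix d e assume de: "d \<in> univ M" "e \<in> univ M" "pls M d e = numM M (Suc j)"
    show "\<exists>i\<le>Suc j. d = numM M i"
    proof (cases "e = zer M")
      case True then show ?thesis using de Q3 by (intro exI[of _ "Suc j"]) simp
    next
      case False
      then obtain e' where e': "e' \<in> univ M" "e = suc M e'" using zero_or_suc de by blast
      then have "suc M (pls M d e') = suc M (numM M j)" using de Q4 by simp
      then have "pls M d e' = numM M j" using Q2[of "pls M d e'" "numM M j"] de e' by simp
      then obtain i where "i \<le> j" "d = numM M i" using Suc.IH de e' by blast
      then show ?thesis by (intro exI[of _ i]) simp
    qed
  qed
qed

lemma bounded: "d \<in> univ M \<Longrightarrow> e \<in> univ M \<Longrightarrow> pls M d (suc M e) = numM M k \<Longrightarrow> \<exists>i<k. d = numM M i"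
proof -
  assume de: "d \<in> univ M" "e \<in> univ M" "pls M d (suc M e) = numM M k"
  then have h: "suc M (pls M d e) = numM M k" using Q4 by simp
  have "k \<noteq> 0"
  proof
    assume "k = 0" then have "suc M (pls M d e) = zer M" using h by simp
    then show False using Q1[of "pls M d e"] de by simp
  qed
  then obtain k' where k: "k = Suc k'" by (cases k) auto
  then have "pls M d e = numM M k'" using h Q2[of "pls M d e" "numM M k'"] de by simp
  then obtain i where "i \<le> k'" "d = numM M i" using bounded_aux de by blast
  then show ?thesis using k by (intro exI[of _ i]) simp
qed

lemma evt_abs: "(\<forall>x\<in>FVt u. t x = numM M (s x)) \<Longrightarrow> evt M t u = numM M (evt Nstd s u)"
  by (induction u) (auto simp: Nstd_def num_add num_mult)

lemma delta0_abs:
  "delta0 \<phi> \<Longrightarrow> (\<forall>x\<in>FV \<phi>. t x = numM M (s x)) \<Longrightarrow> sat M \<phi> t = sat Nstd \<phi> s"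
proof (induction arbitrary: t s rule: delta0.induct)
  case (1 u v)
  then show ?case using evt_abs[of u t s] evt_abs[of v t s] num_inj by auto
next
  case (2 a) then show ?case by simp
next
  case (3 a b)
  have "sat M a t = sat Nstd a s" by (rule "3.IH"(1)) (use "3.prems" in auto)
  moreover have "sat M b t = sat Nstd b s" by (rule "3.IH"(2)) (use "3.prems" in auto)
  ultimately show ?case by simp
next
  case (4 a y u z)
  let ?k = "evt Nstd s u"
  have fu: "FVt u \<subseteq> FV (All y (Imp (Exq z (Eq (Pl (Var y) (Sc (Var z))) u)) a))"
    using 4 by (auto simp: Exq_def)
  have ue: "evt M t u = numM M ?k" using evt_abs 4 fu by blast
  have IH: "sat M a (t(y := numM M i)) = sat Nstd a (s(y := i))" for i
    by (rule "4.IH") (use "4.prems" in \<open>auto simp: Exq_def\<close>)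
  have L: "sat M (All y (Imp (Exq z (Eq (Pl (Var y) (Sc (Var z))) u)) a)) t
      = (\<forall>d\<in>univ M. (\<exists>e\<in>univ M. pls M d (suc M e) = numM M ?k) \<longrightarrow> sat M a (t(y := d)))"
    using 4 ue by simp
  have R: "sat Nstd (All y (Imp (Exq z (Eq (Pl (Var y) (Sc (Var z))) u)) a)) s
      = (\<forall>d. (\<exists>e. d + Suc e = ?k) \<longrightarrow> sat Nstd a (s(y := d)))"
    using 4 by simp
  have "(\<forall>d\<in>univ M. (\<exists>e\<in>univ M. pls M d (suc M e) = numM M ?k) \<longrightarrow> sat M a (t(y := d)))
      = (\<forall>d. (\<exists>e. d + Suc e = ?k) \<longrightarrow> sat Nstd a (s(y := d)))"
  proof
    assume H: "\<forall>d\<in>univ M. (\<exists>e\<in>univ M. pls M d (suc M e) = numM M ?k) \<longrightarrow> sat M a (t(y := d))"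
    show "\<forall>d. (\<exists>e. d + Suc e = ?k) \<longrightarrow> sat Nstd a (s(y := d))"
    proof (intro allI impI)
      fix d assume "\<exists>e. d + Suc e = ?k"
      then obtain e where e: "d + Suc e = ?k" by blast
      have "pls M (numM M d) (suc M (numM M e)) = numM M ?k"
        using e num_add[of d "Suc e"] by simp
      then have "sat M a (t(y := numM M d))" using H numM_U by blast
      then show "sat Nstd a (s(y := d))" using IH by simp
    qed
  next
    assume H: "\<forall>d. (\<exists>e. d + Suc e = ?k) \<longrightarrow> sat Nstd a (s(y := d))"
    show "\<forall>d\<in>univ M. (\<exists>e\<in>univ M. pls M d (suc M e) = numM M ?k) \<longrightarrow> sat M a (t(y := d))"
    proof (intro ballI impI)
      fix d assume d: "d \<in> univ M" and "\<exists>e\<in>univ M. pls M d (suc M e) = numM M ?k"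
      then obtain e where "e \<in> univ M" "pls M d (suc M e) = numM M ?k" by blast
      then obtain i where i: "i < ?k" "d = numM M i" using bounded d by blast
      then have "i + Suc (?k - i - 1) = ?k" by simp
      then have "sat Nstd a (s(y := i))" using H by blast
      then show "sat M a (t(y := d))" using IH i by simp
    qed
  qed
  then show ?case using L R by simp
qed

lemma sigma1_complete:
  "sigma1 \<phi> \<Longrightarrow> sat Nstd \<phi> s \<Longrightarrow> (\<forall>x\<in>FV \<phi>. t x = numM M (s x)) \<Longrightarrow> sat M \<phi> t"
proof (induction arbitrary: t s rule: sigma1.induct)
  case (1 a) then show ?case using delta0_abs by blast
next
  case (2 a y)
  then obtain d where d: "sat Nstd a (s(y := d))" by (auto simp: Exq_def)
  have "sat M a (t(y := numM M d))"
    by (rule "2.IH"[OF d]) (use "2.prems" in \<open>auto simp: Exq_def\<close>)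
  then show ?case by (auto simp: Exq_def intro: bexI[of _ "numM M d"])
qed

end

lemma subst_closed: "FV a = {} \<Longrightarrow> subst x t a = a"
proof -
  assume "FV a = {}"
  then have "subst x t a = substs Var a" unfolding subst_def by (intro substs_cong) auto
  then show ?thesis by simp
qed

lemma E4_entails:
  assumes dW: "defines_W WF"
    and Wn: "W n = {prod_encode (m, gn a) | m a. FV a \<subseteq> {xv} \<and> entails (SigmaT WF n) (subst xv (num m) a)}"
    and fv: "FV \<phi> = {}" and ent: "entails (SigmaT WF n) \<phi>"
  shows "entails (SigmaT WF n) (K \<phi>)"
  unfolding entails_def
proof (intro allI impI)
  let ?S = "SigmaT WF n"
  fix M t assume str: "is_structure M" and mod: "models M ?S" and t: "is_assign M t"
  have inS: "b \<in> ?S" if "b \<in> PA \<union> Ax3 WF n" for b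
  proof -
    have "(K ^^ 0) b \<in> ?S" unfolding SigmaT_def using that by blast
    then show ?thesis by simp
  qed
  have pa: "\<And>a s. a \<in> PA \<Longrightarrow> is_assign M s \<Longrightarrow> sat M a s"
    using mod inS unfolding models_def by blast
  interpret P: PAmod M by unfold_locales (use str pa in auto)
  have kf: "kfree WF" and fvW: "FV WF \<subseteq> {0,1,2}"
    and ss: "\<And>s. sat Nstd WF s \<longleftrightarrow> prod_encode (s 0, s 1) \<in> W (s 2)"
    and sg: "sigma1 WF"
    using dW sigma1_kfree unfolding defines_W_def by auto
  let ?g = "gn \<phi>"
  let ?t' = "t(0 := zer M)"
  have t': "is_assign M ?t'" using t by (auto simp: is_assign_def)
  have ax: "All 0 (Iff (K \<phi>) (memW WF (Var 0) (num ?g) (num n))) \<in> ?S"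
    using inS fv unfolding Ax3_def by blast
  then have axs: "sat M (All 0 (Iff (K \<phi>) (memW WF (Var 0) (num ?g) (num n)))) t"
    using mod t unfolding models_def by blast
  define s where "s = (\<lambda>x::nat. 0::nat)(1 := ?g, 2 := n)"
  have "prod_encode (0, ?g) \<in> W n"
    unfolding Wn using fv ent subst_closed[OF fv] by fastforce
  then have "sat Nstd WF s" using ss unfolding s_def by simp
  then have "sat M WF (?t'(0 := zer M, 1 := numM M ?g, 2 := numM M n))"
  proof (rule P.sigma1_complete[OF sg])
    show "\<forall>x\<in>FV WF. (?t'(0 := zer M, 1 := numM M ?g, 2 := numM M n)) x = numM M (s x)"
      using fvW unfolding s_def by auto
  qed
  then have "sat M (memW WF (Var 0) (num ?g) (num n)) ?t'"
    using sat_memW[OF kf fvW] by (simp add: evt_num)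
  then have "kint M \<phi> ?t'" using axs by simp
  then show "sat M (K \<phi>) t" using str_a[OF str t t', of \<phi>] fv by simp
qed

theorem proposition19:
  fixes WF :: fm and n :: nat
  assumes "defines_W WF"
    and "W n = {prod_encode (m, gn a) | m a. FV a \<subseteq> {xv} \<and> entails (SigmaT WF n) (subst xv (num m) a)}"
  shows "models (M_of (SigmaT WF n)) (SigmaT WF n)"
  by (rule main_assembly[OF assms Mof_structure E4_entails[OF assms]])

end
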